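(* Let $\mathcal{I}\subseteq\mathcal{M}_m$ be decreasing, $r=\max_{u\in\mathcal{I}}\deg u$, and $f,g\in\mathcal{I}_r$ with $\deg(\gcd(f,g))=r-3$. Then $$\bigl|\mathrm{LTA}(m,2)\cdot f+\mathrm{LTA}(m,2)\cdot g\bigr|=\bigl|\mathrm{LTA}(m,2)\cdot f\bigr|\cdot\bigl|\mathrm{LTA}(m,2)\cdot g\bigr|.$$
   Context: $\mathcal{M}_m$: square-free monomials in $x_0,\dots,x_{m-1}$ in $\mathbf{R}_m=\mathbb{F}_2[x_0,\dots,x_{m-1}]/(x_i^2-x_i)$; $\operatorname{ind}(u)$ the variable indices, $\deg u=|\operatorname{ind}u|$, $\gcd$ has index set the intersection. For equal-degree monomials with increasing indices, $u\preceq_{sh}v$ iff componentwise $\le$; $u\preceq v$ iff $u\preceq_{sh}v^*\mid v$ for some $v^*$; $\mathcal{I}$ decreasing if $f\in\mathcal{I}$, $g\preceq f\Rightarrow g\in\mathcal{I}$; $\mathcal{I}_r$ its degree-$r$ elements. $\mathrm{LTA}(m,2)$: pairs $(\mathbf{B},\varepsilon)$, $\mathbf{B}=(b_{i,j})$ binary lower unitriangular, $\varepsilon\in\mathbb{F}_2^m$, acting on monomial $u$ by $x_i\mapsto x_i+\sum_{j<i}b_{i,j}x_j+\varepsilon_i$ for $i\in\operatorname{ind}u$; $\mathrm{LTA}(m,2)\cdot f$ is the orbit. $A+B=\{a+b\}$. *)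

theory Defs
  imports Main
begin

text \<open>Square-free monomials of R_m are represented by their index sets (finite subsets
of {..<m}); elements of R_m = F_2[x_0..x_{m-1}]/(x_i^2-x_i) are represented in the
monomial basis, i.e. as finite sets of monomials (coefficients in F_2).\<close>

type_synonym monomial = "nat set"
type_synonym rpoly = "nat set set"

definition monomials :: "nat \<Rightarrow> monomial set" where
  "monomials m = {u. u \<subseteq> {..<m}}"

definition preceq_sh :: "monomial \<Rightarrow> monomial \<Rightarrow> bool" where
  "preceq_sh u v \<longleftrightarrow> finite u \<and> finite v \<and> card u = card v \<and>
     (\<forall>k < card u. sorted_list_of_set u ! k \<le> sorted_list_of_set v ! k)"

definition preceq :: "monomial \<Rightarrow> monomial \<Rightarrow> bool" where
  "preceq u v \<longleftrightarrow> (\<exists>w. w \<subseteq> v \<and> preceq_sh u w)"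

definition decreasing :: "nat \<Rightarrow> monomial set \<Rightarrow> bool" where
  "decreasing m I \<longleftrightarrow> (\<forall>f\<in>I. \<forall>g\<in>monomials m. preceq g f \<longrightarrow> g \<in> I)"

text \<open>Ring operations of R_m in the monomial basis: addition is symmetric difference,
product uses x_a x_b = x_{a \<union> b} with F_2 coefficients.\<close>
definition padd :: "rpoly \<Rightarrow> rpoly \<Rightarrow> rpoly" where
  "padd p q = (p - q) \<union> (q - p)"

definition pmul :: "rpoly \<Rightarrow> rpoly \<Rightarrow> rpoly" where
  "pmul p q = {c. odd (card {(a, b). a \<in> p \<and> b \<in> q \<and> a \<union> b = c})}"

definition pone :: rpoly where
  "pone = {{}}"

text \<open>Image of x_i: x_i + sum_{j<i} b_{i,j} x_j + eps_i.\<close>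
definition lin :: "(nat \<Rightarrow> nat \<Rightarrow> bool) \<Rightarrow> (nat \<Rightarrow> bool) \<Rightarrow> nat \<Rightarrow> rpoly" where
  "lin b eps i = {{i}} \<union> {{j} | j. j < i \<and> b i j} \<union> (if eps i then {{}} else {})"

definition lta_act :: "(nat \<Rightarrow> nat \<Rightarrow> bool) \<Rightarrow> (nat \<Rightarrow> bool) \<Rightarrow> monomial \<Rightarrow> rpoly" where
  "lta_act b eps u = foldr (\<lambda>i acc. pmul (lin b eps i) acc) (sorted_list_of_set u) pone"

text \<open>Orbit LTA(m,2)\<cdot>u. Only entries b i j with j < i < m and eps i with i < m are used,
so quantifying over all b, eps gives exactly the orbit under lower unitriangular B.\<close>
definition lta_orbit :: "nat \<Rightarrow> monomial \<Rightarrow> rpoly set" where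
  "lta_orbit m u = {lta_act b eps u | b eps.
      (\<forall>i j. b i j \<longrightarrow> j < i \<and> i < m) \<and> (\<forall>i. eps i \<longrightarrow> i < m)}"

definition setsum :: "rpoly set \<Rightarrow> rpoly set \<Rightarrow> rpoly set" where
  "setsum A B = {padd a c | a c. a \<in> A \<and> c \<in> B}"

end

theory Submission
  imports Defs
begin

definition aff :: "nat set \<Rightarrow> bool \<Rightarrow> nat set \<Rightarrow> bool" where
  "aff D c x = (odd (card (D \<inter> x)) = c)"
definition flat :: "nat set \<Rightarrow> (nat \<Rightarrow> nat set) \<Rightarrow> (nat \<Rightarrow> bool) \<Rightarrow> nat set set" where
  "flat k B e = {x. \<forall>i\<in>k. (i \<in> x) = aff (B i) (e i) x}"
definition wfs :: "nat set \<Rightarrow> (nat \<Rightarrow> nat set) \<Rightarrow> bool" where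
  "wfs k B = (finite k \<and> (\<forall>i\<in>k. B i \<subseteq> {..<i}))"

lemma aff_local:
  assumes "B \<subseteq> {..<i}" "\<And>j. j < i \<Longrightarrow> j \<in> x \<longleftrightarrow> j \<in> y"
  shows "aff B c x = aff B c y"
proof -
  have "B \<inter> x = B \<inter> y" using assms by auto
  then show ?thesis by (simp add: aff_def)
qed

lemma solve:
  assumes "wfs k B" "\<forall>i\<in>k. i < p \<longrightarrow> (i\<in>z) = aff (B i) (e i) z"
  shows "\<exists>y\<in>flat k B e. \<forall>j. (j \<notin> k \<or> j < p) \<longrightarrow> (j\<in>y \<longleftrightarrow> j\<in>z)"
proof -
  have "\<exists>y. (\<forall>i\<in>k. i<n \<longrightarrow> (i\<in>y) = aff (B i) (e i) y) \<and> (\<forall>j. (j\<notin>k \<or> j<p) \<longrightarrow> (j\<in>y \<longleftrightarrow> j\<in>z))" for n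
  proof (induction n)
    case 0 show ?case by (rule exI[of _ z]) auto
  next
    case (Suc n)
    then obtain y where y1: "\<forall>i\<in>k. i<n \<longrightarrow> (i\<in>y) = aff (B i) (e i) y"
      and y2: "\<forall>j. (j\<notin>k \<or> j<p) \<longrightarrow> (j\<in>y \<longleftrightarrow> j\<in>z)" by blast
    show ?case
    proof (cases "n \<in> k \<and> (n\<in>y) \<noteq> aff (B n) (e n) y")
      case False
      then have "\<forall>i\<in>k. i<Suc n \<longrightarrow> (i\<in>y) = aff (B i) (e i) y" using y1 less_Suc_eq by auto
      then show ?thesis using y2 by blast
    next
      case True
      define y' where "y' = (if n\<in>y then y - {n} else insert n y)"
      have Bn: "B n \<subseteq> {..<n}" using assms(1) True by (auto simp: wfs_def)
      have np: "\<not> n < p"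
      proof
        assume "n<p"
        have "aff (B n) (e n) y = aff (B n) (e n) z"
          by (rule aff_local[OF Bn]) (use y2 \<open>n<p\<close> in auto)
        then show False using True y2 assms(2) \<open>n<p\<close> by auto
      qed
      have agree: "\<And>j. j<n \<Longrightarrow> j\<in>y' \<longleftrightarrow> j\<in>y" by (auto simp: y'_def)
      have c1: "\<forall>i\<in>k. i<Suc n \<longrightarrow> (i\<in>y') = aff (B i) (e i) y'"
      proof (intro ballI impI)
        fix i assume i: "i \<in> k" "i < Suc n"
        have Bi: "B i \<subseteq> {..<i}" using assms(1) i by (auto simp: wfs_def)
        show "(i\<in>y') = aff (B i) (e i) y'"
        proof (cases "i = n")
          case True
          have "aff (B n) (e n) y' = aff (B n) (e n) y" by (rule aff_local[OF Bn]) (use agree in auto)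
          then show ?thesis using True \<open>n \<in> k \<and> _\<close> by (auto simp: y'_def)
        next
          case False
          then have "i < n" using i by auto
          have "aff (B i) (e i) y' = aff (B i) (e i) y" by (rule aff_local[OF Bi]) (use agree \<open>i<n\<close> in auto)
          then show ?thesis using y1 i \<open>i<n\<close> agree by auto
        qed
      qed
      have c2: "\<forall>j. (j\<notin>k \<or> j<p) \<longrightarrow> (j\<in>y' \<longleftrightarrow> j\<in>z)"
        using y2 np True by (auto simp: y'_def)
      show ?thesis using c1 c2 by blast
    qed
  qed
  note ex = this
  have "\<exists>n. \<forall>i\<in>k. i < n" using assms(1) by (simp add: wfs_def finite_nat_set_iff_bounded)
  then obtain n where n: "\<forall>i\<in>k. i < n" by blast
  obtain y where y1: "\<forall>i\<in>k. i<n \<longrightarrow> (i\<in>y) = aff (B i) (e i) y" and y2: "\<forall>j. (j\<notin>k \<or> j<p) \<longrightarrow> (j\<in>y \<longleftrightarrow> j\<in>z)"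
    using ex[of n] by blast
  have "\<forall>i\<in>k. (i\<in>y) = aff (B i) (e i) y" using y1 n by blast
  then have "y \<in> flat k B e" by (simp add: flat_def)
  then show ?thesis using y2 by blast
qed

lemma type_unique:
  assumes "wfs k B" "wfs k' B'" "flat k B e = flat k' B' e'" "flat k B e \<noteq> {}"
  shows "k \<subseteq> k'"
proof
  fix i assume "i \<in> k"
  show "i \<in> k'"
  proof (rule ccontr)
    assume ni: "i \<notin> k'"
    obtain x where x: "x \<in> flat k B e" using assms(4) by blast
    define z where "z = (if i\<in>x then x - {i} else insert i x)"
    have "\<forall>j\<in>k'. j < i \<longrightarrow> (j\<in>z) = aff (B' j) (e' j) z"
    proof (intro ballI impI)
      fix j assume j: "j \<in> k'" "j < i"
      have "aff (B' j) (e' j) z = aff (B' j) (e' j) x"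
        by (rule aff_local[of _ j]) (use assms(2) j in \<open>auto simp: wfs_def z_def\<close>)
      moreover have "x \<in> flat k' B' e'" using x assms(3) by simp
      ultimately show "(j\<in>z) = aff (B' j) (e' j) z" using j by (auto simp: flat_def z_def)
    qed
    from solve[OF assms(2) this] obtain y where y: "y \<in> flat k' B' e'"
      "\<forall>j. (j\<notin>k' \<or> j<i) \<longrightarrow> (j\<in>y \<longleftrightarrow> j\<in>z)" by blast
    have "y \<in> flat k B e" using y assms(3) by simp
    then have "(i \<in> y) = aff (B i) (e i) y" using \<open>i\<in>k\<close> by (auto simp: flat_def)
    moreover have "aff (B i) (e i) y = aff (B i) (e i) x"
      by (rule aff_local[of _ i]) (use assms(1) \<open>i\<in>k\<close> y(2) in \<open>auto simp: wfs_def z_def\<close>)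
    moreover have "(i \<in> x) = aff (B i) (e i) x" using x \<open>i\<in>k\<close> by (auto simp: flat_def)
    moreover have "(i\<in>y) = (i \<notin> x)" using y(2) ni by (auto simp: z_def)
    ultimately show False by simp
  qed
qed

lemma odd_card_symdiff:
  assumes "finite X" "finite Y"
  shows "odd (card ((X - Y) \<union> (Y - X))) = (odd (card X) \<noteq> odd (card Y))"
proof -
  have a: "card X = card (X - Y) + card (X \<inter> Y)" using card_Int_Diff[OF assms(1), of Y] by simp
  have b: "card Y = card (Y - X) + card (X \<inter> Y)" using card_Int_Diff[OF assms(2), of X] by (simp add: Int_commute)
  have c: "card ((X - Y) \<union> (Y - X)) = card (X - Y) + card (Y - X)"
    using assms by (intro card_Un_disjoint) auto
  show ?thesis unfolding c using a b by (cases "even (card (X-Y))"; cases "even (card (Y-X))"; cases "even (card (X\<inter>Y))"; simp add: even_add)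
qed

lemma odd_card_symdiff_int:
  assumes "finite X" "finite Y"
  shows "odd (card (((X - Y) \<union> (Y - X)) \<inter> x)) = (odd (card (X \<inter> x)) \<noteq> odd (card (Y \<inter> x)))"
proof -
  have "((X - Y) \<union> (Y - X)) \<inter> x = ((X \<inter> x) - (Y \<inter> x)) \<union> ((Y \<inter> x) - (X \<inter> x))" by auto
  then show ?thesis using odd_card_symdiff[of "X \<inter> x" "Y \<inter> x"] assms by simp
qed

lemma odd_card_split:
  assumes "finite D" "n \<in> D"
  shows "odd (card (D \<inter> x)) = ((n \<in> x) \<noteq> odd (card ((D - {n}) \<inter> x)))"
proof (cases "n \<in> x")
  case True
  then have "D \<inter> x = insert n ((D - {n}) \<inter> x)" using assms by auto
  then show ?thesis using assms True by simp
next
  case False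
  then have "D \<inter> x = (D - {n}) \<inter> x" by auto
  then show ?thesis using False by simp
qed

definition goodcut where
  "goodcut k S = (S = {} \<or> (\<exists>k' B' e'. wfs k' B' \<and> S = flat k' B' e' \<and> k \<subseteq> k' \<and> (\<exists>p. k' \<subseteq> insert p k)))"

lemma cut_aux:
  assumes "wfs k B"
  shows "D \<subseteq> {..<n} \<Longrightarrow> goodcut k {x \<in> flat k B e. aff D c x}"
proof (induction n arbitrary: D c)
  case 0
  then have D: "D = {}" by auto
  show ?case
  proof (cases c)
    case True
    then show ?thesis by (simp add: goodcut_def D aff_def)
  next
    case False
    then have "{x \<in> flat k B e. aff D c x} = flat k B e" by (simp add: D aff_def)
    then show ?thesis using assms unfolding goodcut_def by blast
  qed
next
  case (Suc n)
  have fD: "finite D" using Suc.prems finite_subset by blast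
  show ?case
  proof (cases "n \<in> D")
    case False
    then have "D \<subseteq> {..<n}" using Suc.prems by (auto simp: less_Suc_eq)
    then show ?thesis using Suc.IH by blast
  next
    case nD: True
    have Dn: "D - {n} \<subseteq> {..<n}" using Suc.prems by (auto simp: less_Suc_eq)
    show ?thesis
    proof (cases "n \<in> k")
      case True
      define D' where "D' = ((D - {n}) - B n) \<union> (B n - (D - {n}))"
      have Bn: "B n \<subseteq> {..<n}" using assms True by (auto simp: wfs_def)
      have fB: "finite (B n)" using Bn finite_subset by blast
      have D'n: "D' \<subseteq> {..<n}" using Dn Bn by (auto simp: D'_def)
      have eq: "{x \<in> flat k B e. aff D c x} = {x \<in> flat k B e. aff D' (c = e n) x}"
      proof (intro Collect_cong conj_cong refl)
        fix x assume "x \<in> flat k B e"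
        then have xn: "(n \<in> x) = aff (B n) (e n) x" using True by (auto simp: flat_def)
        have "odd (card (D' \<inter> x)) = (odd (card ((D - {n}) \<inter> x)) \<noteq> odd (card (B n \<inter> x)))"
          unfolding D'_def using fD fB by (intro odd_card_symdiff_int) auto
        then show "aff D c x = aff D' (c = e n) x"
          using odd_card_split[OF fD nD, of x] xn by (auto simp: aff_def)
      qed
      show ?thesis using Suc.IH[OF D'n, of "c = e n"] eq by simp
    next
      case False
      define k' where "k' = insert n k"
      define B' where "B' = B(n := D - {n})"
      define e' where "e' = e(n := \<not> c)"
      have w: "wfs k' B'" using assms Dn by (auto simp: wfs_def k'_def B'_def)
      have "{x \<in> flat k B e. aff D c x} = flat k' B' e'"
      proof (intro set_eqI iffI)
        fix x assume "x \<in> {x \<in> flat k B e. aff D c x}"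
        then show "x \<in> flat k' B' e'" using False odd_card_split[OF fD nD, of x]
          by (auto simp: flat_def k'_def B'_def e'_def aff_def)
      next
        fix x assume x: "x \<in> flat k' B' e'"
        then have "x \<in> flat k B e" using False
          by (auto simp: flat_def k'_def B'_def e'_def aff_def split: if_splits)
        moreover have "aff D c x" using x odd_card_split[OF fD nD, of x]
          by (auto simp: flat_def k'_def B'_def e'_def aff_def)
        ultimately show "x \<in> {x \<in> flat k B e. aff D c x}" by simp
      qed
      then show ?thesis using w unfolding goodcut_def k'_def by blast
    qed
  qed
qed

lemma cut:
  assumes "wfs k B" "finite D"
  shows "goodcut k {x \<in> flat k B e. aff D c x}"
proof -
  obtain n where "D \<subseteq> {..<n}" using assms(2) finite_nat_set_iff_bounded by (auto simp: subset_eq)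
  then show ?thesis using cut_aux[OF assms(1)] by blast
qed


definition sd :: "'a set \<Rightarrow> 'a set \<Rightarrow> 'a set" where
  "sd X Y = (X - Y) \<union> (Y - X)"

lemma sd_mem: "x \<in> sd X Y \<longleftrightarrow> (x \<in> X) \<noteq> (x \<in> Y)"
  by (auto simp: sd_def)

lemma xor4: "((\<not>a1 \<and> A1) \<noteq> (\<not>a2 \<and> A2)) = ((\<not>a3 \<and> A3) \<noteq> (\<not>a4 \<and> A4)) \<Longrightarrow> ((a1 \<and> A1) \<noteq> (a2 \<and> A2)) = ((a3 \<and> A3) \<noteq> (a4 \<and> A4)) \<Longrightarrow> (A1 \<noteq> A2) = (A3 \<noteq> A4)"
  by argo
lemma xor3: "((\<not>a1 \<and> A1) \<noteq> (\<not>a2 \<and> A2)) = (\<not>a3 \<and> A3) \<Longrightarrow> ((a1 \<and> A1) \<noteq> (a2 \<and> A2)) = (a3 \<and> A3) \<Longrightarrow> (A1 \<noteq> A2) = A3"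
  by argo
lemma xor3b: "((\<not>a1 \<and> A1) \<noteq> (\<not>a2 \<and> A2)) = (A3 \<noteq> A4) \<Longrightarrow> ((a1 \<and> A1) \<noteq> (a2 \<and> A2)) = (A3 \<noteq> A4) \<Longrightarrow> A1 = A2"
  by argo
lemma xor3c: "(A1 \<noteq> A2) = (\<not>a3 \<and> A3) \<Longrightarrow> (A1 \<noteq> A2) = (a3 \<and> A3) \<Longrightarrow> \<not> A3"
  by argo
lemma xor3d: "((\<not>a1 \<and> A1) \<noteq> (\<not>a2 \<and> A2)) = A3 \<Longrightarrow> ((a1 \<and> A1) \<noteq> (a2 \<and> A2)) = A3 \<Longrightarrow> A1 = A2"
  by argo

lemma sd_empty: "sd X Y = {} \<Longrightarrow> X = Y"
  by (auto simp: sd_def)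

lemma wfs_Diff: "wfs k B \<Longrightarrow> wfs (k - {t}) B"
  by (auto simp: wfs_def)

lemma aff_ins: "B \<subseteq> {..<t} \<Longrightarrow> aff B c (insert t x) = aff B c x"
  by (rule aff_local[of _ t]) auto

lemma aff_del: "B \<subseteq> {..<t} \<Longrightarrow> aff B c (x - {t}) = aff B c x"
  by (rule aff_local[of _ t]) auto

lemma indep_mem:
  assumes "wfs k B" "\<forall>j\<in>k. j < t"
  shows "(x - {t} \<in> flat k B e) = (x \<in> flat k B e)"
    and "(insert t x \<in> flat k B e) = (x \<in> flat k B e)"
proof -
  have h: "\<And>i. i \<in> k \<Longrightarrow> B i \<subseteq> {..<i} \<and> i < t" using assms by (auto simp: wfs_def)
  have a: "aff (B i) c (x - {t}) = aff (B i) c x" if "i \<in> k" for i c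
    by (rule aff_local[of _ i]) (use h[OF that] in auto)
  have b: "aff (B i) c (insert t x) = aff (B i) c x" if "i \<in> k" for i c
    by (rule aff_local[of _ i]) (use h[OF that] in auto)
  have nt: "i \<noteq> t" if "i \<in> k" for i using h[OF that] by auto
  show "(x - {t} \<in> flat k B e) = (x \<in> flat k B e)"
    unfolding flat_def using a nt by auto
  show "(insert t x \<in> flat k B e) = (x \<in> flat k B e)"
    unfolding flat_def using b nt by auto
qed

lemma split_mem:
  assumes "wfs k B" "t \<in> k" "\<forall>j\<in>k. j \<le> t"
  shows "(x - {t} \<in> flat k B e) = (\<not> aff (B t) (e t) x \<and> x \<in> flat (k - {t}) B e)"
    and "(insert t x \<in> flat k B e) = (aff (B t) (e t) x \<and> x \<in> flat (k - {t}) B e)"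
    and "(x \<in> flat k B e) = ((t \<in> x) = aff (B t) (e t) x \<and> x \<in> flat (k - {t}) B e)"
proof -
  have k0: "wfs (k - {t}) B" "\<forall>j\<in>k - {t}. j < t" using assms wfs_Diff by (auto simp: le_less)
  have Bt: "B t \<subseteq> {..<t}" using assms by (auto simp: wfs_def)
  have fl: "\<And>y. (y \<in> flat k B e) = ((t \<in> y) = aff (B t) (e t) y \<and> y \<in> flat (k - {t}) B e)"
    using assms(2) by (auto simp: flat_def)
  show "(x - {t} \<in> flat k B e) = (\<not> aff (B t) (e t) x \<and> x \<in> flat (k - {t}) B e)"
    using fl[of "x - {t}"] indep_mem(1)[OF k0, of x e] aff_del[OF Bt] by auto
  show "(insert t x \<in> flat k B e) = (aff (B t) (e t) x \<and> x \<in> flat (k - {t}) B e)"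
    using fl[of "insert t x"] indep_mem(2)[OF k0, of x e] aff_ins[OF Bt] by auto
  show "(x \<in> flat k B e) = ((t \<in> x) = aff (B t) (e t) x \<and> x \<in> flat (k - {t}) B e)"
    by (rule fl)
qed

lemma aff_xor:
  assumes "finite B1" "finite B2"
  shows "(aff B1 c1 x \<noteq> aff B2 c2 x) = aff ((B1 - B2) \<union> (B2 - B1)) (c1 = c2) x"
  using odd_card_symdiff_int[OF assms, of x] by (auto simp: aff_def)

lemma sd_top:
  assumes "wfs f B1" "wfs f B2" "t \<in> f" "\<forall>j\<in>f. j \<le> t"
    and "flat (f - {t}) B1 e1 = flat (f - {t}) B2 e2"
  shows "sd (flat f B1 e1) (flat f B2 e2) =
     {x \<in> flat (f - {t}) B1 e1. aff ((B1 t - B2 t) \<union> (B2 t - B1 t)) (e1 t = e2 t) x}"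
proof -
  have f1: "finite (B1 t)" "finite (B2 t)" using assms(1-3) finite_subset[of _ "{..<t}"]
    by (auto simp: wfs_def)
  show ?thesis
  proof (rule set_eqI)
    fix x
    have "(aff (B1 t) (e1 t) x \<noteq> aff (B2 t) (e2 t) x) = aff ((B1 t - B2 t) \<union> (B2 t - B1 t)) (e1 t = e2 t) x"
      by (rule aff_xor[OF f1])
    then show "x \<in> sd (flat f B1 e1) (flat f B2 e2) \<longleftrightarrow>
      x \<in> {x \<in> flat (f - {t}) B1 e1. aff ((B1 t - B2 t) \<union> (B2 t - B1 t)) (e1 t = e2 t) x}"
      using split_mem(3)[OF assms(1) assms(3) assms(4), of x e1] split_mem(3)[OF assms(2) assms(3) assms(4), of x e2] assms(5)
      by (auto simp: sd_def)
  qed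
qed


lemma sd_flat_type:
  assumes "wfs g B1" "wfs g B2" "wfs k B3"
    "sd (flat g B1 e1) (flat g B2 e2) = flat k B3 e3" "flat k B3 e3 \<noteq> {}"
  shows "\<exists>a. g - k \<subseteq> {a}"
  using assms
proof (induction "card (g \<union> k)" arbitrary: g k B1 B2 B3 e1 e2 e3 rule: less_induct)
  case less
  have fin: "finite (g \<union> k)" using less.prems by (auto simp: wfs_def)
  have ne: "g \<union> k \<noteq> {}"
  proof
    assume "g \<union> k = {}"
    then have "flat g B1 e1 = UNIV" "flat g B2 e2 = UNIV" by (auto simp: flat_def)
    then show False using less.prems(4,5) by (auto simp: sd_def)
  qed
  define t where "t = Max (g \<union> k)"
  have tmem: "t \<in> g \<union> k" unfolding t_def by (rule Max_in[OF fin ne])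
  have tmax: "\<forall>j\<in>g \<union> k. j \<le> t" using fin by (simp add: t_def)
  have gt: "\<forall>j\<in>g. j \<le> t" "\<forall>j\<in>k. j \<le> t" using tmax by auto
  have P: "((x \<in> flat g B1 e1) \<noteq> (x \<in> flat g B2 e2)) = (x \<in> flat k B3 e3)" for x
    using less.prems(4) unfolding sd_def set_eq_iff by blast
  show ?case
  proof (cases "t \<in> g")
    case tg: True
    show ?thesis
    proof (cases "t \<in> k")
      case tk: True
      have eq: "sd (flat (g-{t}) B1 e1) (flat (g-{t}) B2 e2) = flat (k-{t}) B3 e3"
      proof (rule set_eqI)
        fix x
        show "x \<in> sd (flat (g-{t}) B1 e1) (flat (g-{t}) B2 e2) \<longleftrightarrow> x \<in> flat (k-{t}) B3 e3"
          unfolding sd_mem by (rule xor3[OF P[of "x - {t}", unfolded split_mem(1,2)[OF less.prems(1) tg gt(1), of x e1] split_mem(1,2)[OF less.prems(2) tg gt(1), of x e2] split_mem(1,2)[OF less.prems(3) tk gt(2), of x e3]] P[of "insert t x", unfolded split_mem(1,2)[OF less.prems(1) tg gt(1), of x e1] split_mem(1,2)[OF less.prems(2) tg gt(1), of x e2] split_mem(1,2)[OF less.prems(3) tk gt(2), of x e3]]])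
      qed
      have ne0: "flat (k-{t}) B3 e3 \<noteq> {}"
        using less.prems(5) split_mem(3)[OF less.prems(3) tk gt(2)] by blast
      have "(g-{t}) \<union> (k-{t}) = (g \<union> k) - {t}" by auto
      then have lt: "card ((g-{t}) \<union> (k-{t})) < card (g \<union> k)"
        using card_Diff1_less[OF fin tmem] by simp
      obtain a where "g - {t} - (k - {t}) \<subseteq> {a}"
        using less.hyps[OF lt wfs_Diff[OF less.prems(1)] wfs_Diff[OF less.prems(2)]
            wfs_Diff[OF less.prems(3)] eq ne0] by blast
      then have "g - k \<subseteq> {a}" using tk by blast
      then show ?thesis by blast
    next
      case tk: False
      have k_lt: "\<forall>j\<in>k. j < t" using gt(2) tk by (auto simp: le_less)
      have C0: "flat (g-{t}) B1 e1 = flat (g-{t}) B2 e2"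
      proof (rule set_eqI)
        fix x
        show "x \<in> flat (g-{t}) B1 e1 \<longleftrightarrow> x \<in> flat (g-{t}) B2 e2"
          by (rule xor3d[OF P[of "x - {t}", unfolded split_mem(1,2)[OF less.prems(1) tg gt(1), of x e1] split_mem(1,2)[OF less.prems(2) tg gt(1), of x e2] indep_mem[OF less.prems(3) k_lt, of x e3]] P[of "insert t x", unfolded split_mem(1,2)[OF less.prems(1) tg gt(1), of x e1] split_mem(1,2)[OF less.prems(2) tg gt(1), of x e2] indep_mem[OF less.prems(3) k_lt, of x e3]]])
      qed
      define D where "D = (B1 t - B2 t) \<union> (B2 t - B1 t)"
      have F: "flat k B3 e3 = {x \<in> flat (g-{t}) B1 e1. aff D (e1 t = e2 t) x}"
        using sd_top[OF less.prems(1,2) tg gt(1) C0] less.prems(4) by (simp add: D_def)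
      have fD: "finite D" using less.prems(1,2) tg finite_subset[of _ "{..<t}"]
        by (auto simp: wfs_def D_def)
      have "goodcut (g-{t}) {x \<in> flat (g-{t}) B1 e1. aff D (e1 t = e2 t) x}"
        by (rule cut[OF wfs_Diff[OF less.prems(1)] fD])
      then obtain k' B' e' where k': "wfs k' B'" "flat k B3 e3 = flat k' B' e'" "g - {t} \<subseteq> k'"
        using less.prems(5) F unfolding goodcut_def by auto
      have "k' \<subseteq> k" using type_unique[OF k'(1) less.prems(3) k'(2)[symmetric]] k'(2) less.prems(5) by simp
      then have "g - k \<subseteq> {t}" using k'(3) by blast
      then show ?thesis by blast
    qed
  next
    case tg: False
    then have tk: "t \<in> k" using tmem by auto
    have g_lt: "\<forall>j\<in>g. j < t" using gt(1) tg by (auto simp: le_less)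
    obtain x where x: "x \<in> flat k B3 e3" using less.prems(5) by blast
    then have "x \<in> flat (k-{t}) B3 e3" using split_mem(3)[OF less.prems(3) tk gt(2)] by blast
    moreover have "\<not> x \<in> flat (k-{t}) B3 e3"
      by (rule xor3c[OF P[of "x - {t}", unfolded indep_mem[OF less.prems(1) g_lt, of x e1] indep_mem[OF less.prems(2) g_lt, of x e2] split_mem(1,2)[OF less.prems(3) tk gt(2), of x e3]] P[of "insert t x", unfolded indep_mem[OF less.prems(1) g_lt, of x e1] indep_mem[OF less.prems(2) g_lt, of x e2] split_mem(1,2)[OF less.prems(3) tk gt(2), of x e3]]])
    ultimately show ?thesis by blast
  qed
qed


lemma card_le2: "X \<subseteq> {a, p} \<Longrightarrow> card X \<le> 2"
proof -
  assume "X \<subseteq> {a, p}"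
  then have "card X \<le> card {a, p}" by (intro card_mono) auto
  also have "\<dots> \<le> 2" by (cases "a = p") auto
  finally show ?thesis .
qed

lemma main_top:
  assumes w: "wfs f B1" "wfs f B2" "wfs g B3" "wfs g B4"
    and tf: "t \<in> f" "t \<notin> g" and tmax: "\<forall>j\<in>f \<union> g. j \<le> t"
    and c3: "3 \<le> card (g - f)"
    and eq: "sd (flat f B1 e1) (flat f B2 e2) = sd (flat g B3 e3) (flat g B4 e4)"
  shows "flat f B1 e1 = flat f B2 e2 \<and> flat g B3 e3 = flat g B4 e4"
proof -
  have ft: "\<forall>j\<in>f. j \<le> t" using tmax by auto
  have g_lt: "\<forall>j\<in>g. j < t" using tmax tf(2) by (auto simp: le_less)
  have P: "((x \<in> flat f B1 e1) \<noteq> (x \<in> flat f B2 e2)) = ((x \<in> flat g B3 e3) \<noteq> (x \<in> flat g B4 e4))" for x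
    using eq unfolding sd_def set_eq_iff by blast
  have A0: "flat (f-{t}) B1 e1 = flat (f-{t}) B2 e2"
  proof (rule set_eqI)
    fix x
    show "x \<in> flat (f-{t}) B1 e1 \<longleftrightarrow> x \<in> flat (f-{t}) B2 e2"
      by (rule xor3b[OF P[of "x - {t}", unfolded split_mem(1,2)[OF w(1) tf(1) ft, of x e1] split_mem(1,2)[OF w(2) tf(1) ft, of x e2] indep_mem[OF w(3) g_lt, of x e3] indep_mem[OF w(4) g_lt, of x e4]] P[of "insert t x", unfolded split_mem(1,2)[OF w(1) tf(1) ft, of x e1] split_mem(1,2)[OF w(2) tf(1) ft, of x e2] indep_mem[OF w(3) g_lt, of x e3] indep_mem[OF w(4) g_lt, of x e4]]])
  qed
  define D where "D = (B1 t - B2 t) \<union> (B2 t - B1 t)"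
  have F: "sd (flat f B1 e1) (flat f B2 e2) = {x \<in> flat (f-{t}) B1 e1. aff D (e1 t = e2 t) x}"
    using sd_top[OF w(1,2) tf(1) ft A0] by (simp add: D_def)
  have fD: "finite D" using w(1,2) tf(1) finite_subset[of _ "{..<t}"]
    by (auto simp: wfs_def D_def)
  have gc: "goodcut (f-{t}) {x \<in> flat (f-{t}) B1 e1. aff D (e1 t = e2 t) x}"
    by (rule cut[OF wfs_Diff[OF w(1)] fD])
  show ?thesis
  proof (cases "sd (flat f B1 e1) (flat f B2 e2) = {}")
    case True
    then have "sd (flat g B3 e3) (flat g B4 e4) = {}" using eq by simp
    then show ?thesis using True sd_empty by blast
  next
    case False
    then obtain k' B' e' p where k': "wfs k' B'" "sd (flat f B1 e1) (flat f B2 e2) = flat k' B' e'"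
      "k' \<subseteq> insert p (f - {t})"
      using gc F unfolding goodcut_def by auto
    obtain a where a: "g - k' \<subseteq> {a}"
      using sd_flat_type[OF w(3,4) k'(1), of e3 e4 e'] k'(2) eq False by auto
    have "g - f \<subseteq> {a, p}" using a k'(3) by blast
    then have "card (g - f) \<le> 2" by (rule card_le2)
    then show ?thesis using c3 by simp
  qed
qed

lemma main_flat:
  assumes "wfs f B1" "wfs f B2" "wfs g B3" "wfs g B4" "3 \<le> card (f - g)" "3 \<le> card (g - f)"
   "sd (flat f B1 e1) (flat f B2 e2) = sd (flat g B3 e3) (flat g B4 e4)"
  shows "flat f B1 e1 = flat f B2 e2 \<and> flat g B3 e3 = flat g B4 e4"
  using assms
proof (induction "card (f \<union> g)" arbitrary: f g B1 B2 B3 B4 e1 e2 e3 e4 rule: less_induct)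
  case less
  note w = less.prems(1-4)
  have fin: "finite (f \<union> g)" using less.prems by (auto simp: wfs_def)
  have ne: "f \<union> g \<noteq> {}"
  proof
    assume "f \<union> g = {}"
    then have "card (f - g) = 0" by auto
    then show False using less.prems(5) by linarith
  qed
  define t where "t = Max (f \<union> g)"
  have tmem: "t \<in> f \<union> g" unfolding t_def by (rule Max_in[OF fin ne])
  have tmax: "\<forall>j\<in>f \<union> g. j \<le> t" using fin by (simp add: t_def)
  have ft: "\<forall>j\<in>f. j \<le> t" and gt: "\<forall>j\<in>g. j \<le> t" using tmax by auto
  show ?case
  proof (cases "t \<in> f")
    case tf: True
    show ?thesis
    proof (cases "t \<in> g")
      case tg: True
      have P: "((x \<in> flat f B1 e1) \<noteq> (x \<in> flat f B2 e2)) = ((x \<in> flat g B3 e3) \<noteq> (x \<in> flat g B4 e4))" for x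
        using less.prems(7) unfolding sd_def set_eq_iff by blast
      have eq0: "sd (flat (f-{t}) B1 e1) (flat (f-{t}) B2 e2) = sd (flat (g-{t}) B3 e3) (flat (g-{t}) B4 e4)"
      proof (rule set_eqI)
        fix x
        show "x \<in> sd (flat (f-{t}) B1 e1) (flat (f-{t}) B2 e2) \<longleftrightarrow> x \<in> sd (flat (g-{t}) B3 e3) (flat (g-{t}) B4 e4)"
          unfolding sd_mem by (rule xor4[OF P[of "x - {t}", unfolded split_mem(1,2)[OF w(1) tf ft, of x e1] split_mem(1,2)[OF w(2) tf ft, of x e2] split_mem(1,2)[OF w(3) tg gt, of x e3] split_mem(1,2)[OF w(4) tg gt, of x e4]] P[of "insert t x", unfolded split_mem(1,2)[OF w(1) tf ft, of x e1] split_mem(1,2)[OF w(2) tf ft, of x e2] split_mem(1,2)[OF w(3) tg gt, of x e3] split_mem(1,2)[OF w(4) tg gt, of x e4]]])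
      qed
      have "(f-{t}) \<union> (g-{t}) = (f \<union> g) - {t}" by auto
      then have lt: "card ((f-{t}) \<union> (g-{t})) < card (f \<union> g)"
        using card_Diff1_less[OF fin tmem] by simp
      have d1: "f - {t} - (g - {t}) = f - g" and d2: "g - {t} - (f - {t}) = g - f" using tf tg by auto
      have c1: "3 \<le> card (f - {t} - (g - {t}))" using less.prems(5) unfolding d1 .
      have c2: "3 \<le> card (g - {t} - (f - {t}))" using less.prems(6) unfolding d2 .
      have IH: "flat (f-{t}) B1 e1 = flat (f-{t}) B2 e2 \<and> flat (g-{t}) B3 e3 = flat (g-{t}) B4 e4"
        by (rule less.hyps[OF lt wfs_Diff[OF w(1)] wfs_Diff[OF w(2)] wfs_Diff[OF w(3)] wfs_Diff[OF w(4)]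
          c1 c2 eq0])
      define D1 where "D1 = (B1 t - B2 t) \<union> (B2 t - B1 t)"
      define D2 where "D2 = (B3 t - B4 t) \<union> (B4 t - B3 t)"
      have F1: "sd (flat f B1 e1) (flat f B2 e2) = {x \<in> flat (f-{t}) B1 e1. aff D1 (e1 t = e2 t) x}"
        using sd_top[OF w(1,2) tf ft conjunct1[OF IH]] unfolding D1_def .
      have F2: "sd (flat g B3 e3) (flat g B4 e4) = {x \<in> flat (g-{t}) B3 e3. aff D2 (e3 t = e4 t) x}"
        using sd_top[OF w(3,4) tg gt conjunct2[OF IH]] unfolding D2_def .
      have fD1: "finite D1" using w(1,2) tf finite_subset[of _ "{..<t}"]
        by (auto simp: wfs_def D1_def)
      have fD2: "finite D2" using w(3,4) tg finite_subset[of _ "{..<t}"]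
        by (auto simp: wfs_def D2_def)
      have gc1: "goodcut (f-{t}) {x \<in> flat (f-{t}) B1 e1. aff D1 (e1 t = e2 t) x}"
        by (rule cut[OF wfs_Diff[OF w(1)] fD1])
      have gc2: "goodcut (g-{t}) {x \<in> flat (g-{t}) B3 e3. aff D2 (e3 t = e4 t) x}"
        by (rule cut[OF wfs_Diff[OF w(3)] fD2])
      show ?thesis
      proof (cases "sd (flat f B1 e1) (flat f B2 e2) = {}")
        case True
        then have "sd (flat g B3 e3) (flat g B4 e4) = {}" unfolding less.prems(7) .
        then show ?thesis using True sd_empty by blast
      next
        case False
        obtain k1 C1 c1 where k1: "wfs k1 C1" "sd (flat f B1 e1) (flat f B2 e2) = flat k1 C1 c1"
          "f - {t} \<subseteq> k1"
          using gc1[unfolded goodcut_def, folded F1] False by blast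
        have False2: "sd (flat g B3 e3) (flat g B4 e4) \<noteq> {}" using False unfolding less.prems(7) .
        obtain k2 C2 c2 q where k2: "wfs k2 C2" "sd (flat g B3 e3) (flat g B4 e4) = flat k2 C2 c2"
          "k2 \<subseteq> insert q (g - {t})"
          using gc2[unfolded goodcut_def, folded F2] False2 by blast
        have eqk: "flat k1 C1 c1 = flat k2 C2 c2"
          unfolding k1(2)[symmetric] k2(2)[symmetric] by (rule less.prems(7))
        have nek: "flat k1 C1 c1 \<noteq> {}" using False unfolding k1(2) .
        have k12: "k1 \<subseteq> k2" by (rule type_unique[OF k1(1) k2(1) eqk nek])
        have "f - g \<subseteq> {q, q}"
        proof
          fix y assume y: "y \<in> f - g"
          then have "y \<in> k2" using k1(3) k12 tg by blast
          then show "y \<in> {q, q}" using k2(3) y by blast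
        qed
        then have "card (f - g) \<le> 2" by (rule card_le2)
        then show ?thesis using less.prems(5) by simp
      qed
    next
      case tg: False
      show ?thesis by (rule main_top[OF w tf tg tmax less.prems(6,7)])
    qed
  next
    case tf: False
    then have tg: "t \<in> g" using tmem by auto
    have tmax': "\<forall>j\<in>g \<union> f. j \<le> t" using tmax by auto
    have "flat g B3 e3 = flat g B4 e4 \<and> flat f B1 e1 = flat f B2 e2"
      by (rule main_top[OF w(3,4,1,2) tg tf tmax' less.prems(5) less.prems(7)[symmetric]])
    then show ?thesis by blast
  qed
qed


definition eval :: "rpoly \<Rightarrow> nat set \<Rightarrow> bool" where
  "eval p x = odd (card {u \<in> p. u \<subseteq> x})"

lemma eval_padd:
  assumes "finite p" "finite q"
  shows "eval (padd p q) x = (eval p x \<noteq> eval q x)"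
proof -
  have "{u \<in> padd p q. u \<subseteq> x} = ({u \<in> p. u \<subseteq> x} - {u \<in> q. u \<subseteq> x}) \<union> ({u \<in> q. u \<subseteq> x} - {u \<in> p. u \<subseteq> x})"
    by (auto simp: padd_def)
  then show ?thesis unfolding eval_def using odd_card_symdiff[of "{u \<in> p. u \<subseteq> x}" "{u \<in> q. u \<subseteq> x}"] assms by simp
qed

lemma odd_sum_card:
  assumes "finite U"
  shows "odd (sum (h :: 'a \<Rightarrow> nat) U) = odd (card {c \<in> U. odd (h c)})"
  using assms
proof (induction U rule: finite_induct)
  case empty then show ?case by simp
next
  case (insert a U)
  have "{c \<in> insert a U. odd (h c)} = (if odd (h a) then insert a {c \<in> U. odd (h c)} else {c \<in> U. odd (h c)})"
    by auto
  then show ?case using insert by auto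
qed

lemma pmul_sub: "pmul p q \<subseteq> (\<lambda>(a, b). a \<union> b) ` (p \<times> q)"
proof
  fix c assume "c \<in> pmul p q"
  have "{(a, b). a \<in> p \<and> b \<in> q \<and> a \<union> b = c} \<noteq> {}"
  proof
    assume "{(a, b). a \<in> p \<and> b \<in> q \<and> a \<union> b = c} = {}"
    moreover have "odd (card {(a, b). a \<in> p \<and> b \<in> q \<and> a \<union> b = c})"
      using \<open>c \<in> pmul p q\<close> by (simp add: pmul_def)
    ultimately show False by (simp only: card.empty) simp
  qed
  then obtain a b where "a \<in> p" "b \<in> q" "a \<union> b = c" by blast
  then show "c \<in> (\<lambda>(a, b). a \<union> b) ` (p \<times> q)" by force
qed

lemma finite_pmul: "finite p \<Longrightarrow> finite q \<Longrightarrow> finite (pmul p q)"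
  by (rule finite_subset[OF pmul_sub]) auto

lemma eval_pmul:
  assumes "finite p" "finite q"
  shows "eval (pmul p q) x = (eval p x \<and> eval q x)"
proof -
  define Px where "Px = {a \<in> p. a \<subseteq> x}"
  define Qx where "Qx = {b \<in> q. b \<subseteq> x}"
  define S where "S = Px \<times> Qx"
  define g where "g = (\<lambda>(a::nat set, b::nat set). a \<union> b)"
  define U where "U = g ` S"
  define N where "N = (\<lambda>c. card {(a, b). a \<in> p \<and> b \<in> q \<and> a \<union> b = c})"
  have fS: "finite S" using assms by (simp add: S_def Px_def Qx_def)
  have fU: "finite U" using fS by (simp add: U_def)
  have Nc: "N c = card {s \<in> S. g s = c}" if "c \<in> U" for c
  proof -
    have "c \<subseteq> x" using that by (auto simp: U_def g_def S_def Px_def Qx_def)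
    then have "{(a, b). a \<in> p \<and> b \<in> q \<and> a \<union> b = c} = {s \<in> S. g s = c}"
      by (auto simp: S_def g_def Px_def Qx_def)
    then show ?thesis by (simp add: N_def)
  qed
  have "sum N U = sum (\<lambda>c. card {s \<in> S. g s = c}) U" using Nc by (intro sum.cong) auto
  also have "\<dots> = sum (\<lambda>c. sum (\<lambda>_. 1) {s. s \<in> S \<and> g s = c}) U" by simp
  also have "\<dots> = sum (\<lambda>_. 1) S" by (rule sum.group[OF fS fU]) (simp add: U_def)
  also have "\<dots> = card Px * card Qx" by (simp add: S_def card_cartesian_product)
  finally have sumN: "sum N U = card Px * card Qx" .
  have set: "{c \<in> pmul p q. c \<subseteq> x} = {c \<in> U. odd (N c)}"
  proof (intro set_eqI iffI)
    fix c assume c: "c \<in> {c \<in> pmul p q. c \<subseteq> x}"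
    then obtain a b where ab: "a \<in> p" "b \<in> q" "c = a \<union> b" using pmul_sub by blast
    then have "c \<in> U" using c by (auto simp: U_def g_def S_def Px_def Qx_def)
    then show "c \<in> {c \<in> U. odd (N c)}" using c by (simp add: pmul_def N_def)
  next
    fix c assume c: "c \<in> {c \<in> U. odd (N c)}"
    then have "c \<subseteq> x" by (auto simp: U_def g_def S_def Px_def Qx_def)
    then show "c \<in> {c \<in> pmul p q. c \<subseteq> x}" using c by (simp add: pmul_def N_def)
  qed
  have "eval (pmul p q) x = odd (sum N U)" unfolding eval_def set using odd_sum_card[OF fU, of N] by simp
  also have "\<dots> = (eval p x \<and> eval q x)" unfolding sumN by (simp add: eval_def Px_def Qx_def)
  finally show ?thesis .
qed

lemma eval_lin:
  "eval (lin b eps i) x = ((i \<in> x) = aff {j. j < i \<and> b i j} (eps i) x)"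
proof -
  define S where "S = {j. j < i \<and> b i j}"
  have fS: "finite S" by (simp add: S_def)
  have eq: "{u \<in> lin b eps i. u \<subseteq> x} =
     ((if i \<in> x then {{i}} else {}) \<union> (\<lambda>j. {j}) ` (S \<inter> x)) \<union> (if eps i then {{}} else {})"
    by (auto simp: lin_def S_def)
  have d1: "(if i \<in> x then {{i}} else {}) \<inter> (\<lambda>j. {j}) ` (S \<inter> x) = {}" by (auto simp: S_def)
  have c1: "card ((if i \<in> x then {{i}} else {}) \<union> (\<lambda>j. {j}) ` (S \<inter> x)) =
      (if i \<in> x then 1 else 0) + card (S \<inter> x)"
  proof -
    have "card ((\<lambda>j. {j}) ` (S \<inter> x)) = card (S \<inter> x)" by (intro card_image) (auto simp: inj_on_def)
    then show ?thesis using card_Un_disjoint[OF _ _ d1] fS by auto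
  qed
  have d2: "((if i \<in> x then {{i}} else {}) \<union> (\<lambda>j. {j}) ` (S \<inter> x)) \<inter> (if eps i then {{}} else {}) = {}"
    by auto
  have "card {u \<in> lin b eps i. u \<subseteq> x} = (if i \<in> x then 1 else 0) + card (S \<inter> x) + (if eps i then 1 else 0)"
  proof -
    define X where "X = (if i \<in> x then {{i}} else {}) \<union> (\<lambda>j. {j}) ` (S \<inter> x)"
    have fX: "finite X" using fS by (simp add: X_def)
    have nX: "{} \<notin> X" by (auto simp: X_def)
    have "card (X \<union> (if eps i then {{}} else {})) = card X + (if eps i then 1 else 0)"
      using fX nX by auto
    then show ?thesis unfolding eq using c1 by (simp add: X_def)
  qed
  then show ?thesis unfolding eval_def aff_def S_def[symmetric] by auto
qed

lemma finite_lin: "finite (lin b eps i)"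
proof -
  have "lin b eps i \<subseteq> {{i}} \<union> (\<lambda>j. {j}) ` {..<i} \<union> {{}}" by (auto simp: lin_def)
  then show ?thesis by (rule finite_subset) auto
qed

lemma eval_foldr:
  "finite (foldr (\<lambda>i acc. pmul (lin b eps i) acc) xs pone) \<and>
   eval (foldr (\<lambda>i acc. pmul (lin b eps i) acc) xs pone) x = (\<forall>i\<in>set xs. eval (lin b eps i) x)"
proof (induction xs)
  case Nil
  have "{u \<in> pone. u \<subseteq> x} = {{}}" by (auto simp: pone_def)
  then show ?case by (simp add: pone_def eval_def)
next
  case (Cons a xs)
  then show ?case using eval_pmul[OF finite_lin] finite_pmul[OF finite_lin] by auto
qed

definition Bm :: "(nat \<Rightarrow> nat \<Rightarrow> bool) \<Rightarrow> nat \<Rightarrow> nat set" where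
  "Bm b = (\<lambda>i. {j. j < i \<and> b i j})"

lemma lta_props:
  assumes "finite u"
  shows "finite (lta_act b eps u)" "eval (lta_act b eps u) x = (x \<in> flat u (Bm b) eps)"
    "wfs u (Bm b) \<and> eps = eps"
  using eval_foldr[of b eps "sorted_list_of_set u" x] assms
  by (auto simp: lta_act_def flat_def eval_lin Bm_def wfs_def)

lemma anf_unique:
  assumes "finite p" "finite q" "\<And>x. eval p x = eval q x"
  shows "p = q"
proof (rule ccontr)
  assume "p \<noteq> q"
  define r where "r = padd p q"
  have fr: "finite r" using assms by (simp add: r_def padd_def)
  have "r \<noteq> {}" using \<open>p \<noteq> q\<close> by (auto simp: r_def padd_def)
  then obtain u where u: "u \<in> r" "\<forall>v\<in>r. v \<subseteq> u \<longrightarrow> u = v" using finite_has_minimal[OF fr] by blast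
  have "{v \<in> r. v \<subseteq> u} = {u}" using u by auto
  then have "eval r u" by (simp add: eval_def)
  moreover have "eval r u = (eval p u \<noteq> eval q u)" unfolding r_def by (rule eval_padd[OF assms(1,2)])
  ultimately show False using assms(3) by simp
qed


theorem mainTheorem12:
  fixes m :: nat and I :: "nat set set" and f g :: "nat set"
  assumes "I \<subseteq> monomials m"
    and "decreasing m I"
    and "f \<in> I" and "g \<in> I"
    and "card f = Max (card ` I)" and "card g = Max (card ` I)"
    and "card (f \<inter> g) + 3 = Max (card ` I)"
  shows "card (setsum (lta_orbit m f) (lta_orbit m g))
           = card (lta_orbit m f) * card (lta_orbit m g)"
proof -
  have ff: "finite f" using assms(1,3) by (auto simp: monomials_def intro: finite_subset[of _ "{..<m}"])
  have fg: "finite g" using assms(1,4) by (auto simp: monomials_def intro: finite_subset[of _ "{..<m}"])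
  have c1: "3 \<le> card (f - g)"
    using card_Int_Diff[OF ff, of g] assms(5,7) by simp
  have c2: "3 \<le> card (g - f)"
    using card_Int_Diff[OF fg, of f] assms(6,7) by (simp add: Int_commute)
  define Phi where "Phi = (\<lambda>(a, c). padd a c)"
  have ss: "setsum (lta_orbit m f) (lta_orbit m g) = Phi ` (lta_orbit m f \<times> lta_orbit m g)"
    by (auto simp: setsum_def Phi_def)
  have inj: "inj_on Phi (lta_orbit m f \<times> lta_orbit m g)"
  proof (rule inj_onI)
    fix p1 p2 assume p1: "p1 \<in> lta_orbit m f \<times> lta_orbit m g" and p2: "p2 \<in> lta_orbit m f \<times> lta_orbit m g"
      and eq: "Phi p1 = Phi p2"
    obtain b1 eps1 b3 eps3 where p1e: "p1 = (lta_act b1 eps1 f, lta_act b3 eps3 g)"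
      using p1 by (auto simp: lta_orbit_def)
    obtain b2 eps2 b4 eps4 where p2e: "p2 = (lta_act b2 eps2 f, lta_act b4 eps4 g)"
      using p2 by (auto simp: lta_orbit_def)
    note L1 = lta_props[OF ff, of b1 eps1] and L2 = lta_props[OF ff, of b2 eps2]
    note L3 = lta_props[OF fg, of b3 eps3] and L4 = lta_props[OF fg, of b4 eps4]
    have ev: "eval (padd (lta_act b1 eps1 f) (lta_act b3 eps3 g)) x =
              eval (padd (lta_act b2 eps2 f) (lta_act b4 eps4 g)) x" for x
      using eq by (simp add: p1e p2e Phi_def)
    have "((x \<in> flat f (Bm b1) eps1) \<noteq> (x \<in> flat g (Bm b3) eps3)) =
          ((x \<in> flat f (Bm b2) eps2) \<noteq> (x \<in> flat g (Bm b4) eps4))" for x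
      using ev[of x] unfolding eval_padd[OF L1(1) L3(1)] eval_padd[OF L2(1) L4(1)] L1(2) L2(2) L3(2) L4(2) .
    then have "sd (flat f (Bm b1) eps1) (flat f (Bm b2) eps2) = sd (flat g (Bm b3) eps3) (flat g (Bm b4) eps4)"
      unfolding sd_def by blast
    from main_flat[OF conjunct1[OF L1(3)] conjunct1[OF L2(3)] conjunct1[OF L3(3)] conjunct1[OF L4(3)] c1 c2 this]
    have fe: "flat f (Bm b1) eps1 = flat f (Bm b2) eps2" "flat g (Bm b3) eps3 = flat g (Bm b4) eps4" by auto
    have "lta_act b1 eps1 f = lta_act b2 eps2 f"
      by (rule anf_unique[OF L1(1) L2(1)]) (simp add: L1(2) L2(2) fe)
    moreover have "lta_act b3 eps3 g = lta_act b4 eps4 g"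
      by (rule anf_unique[OF L3(1) L4(1)]) (simp add: L3(2) L4(2) fe)
    ultimately show "p1 = p2" by (simp add: p1e p2e)
  qed
  show ?thesis unfolding ss card_image[OF inj] by (rule card_cartesian_product)
qed

end
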